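(* Let $F:L_n\to\Delta K$ be a $2$-filtration and let $p:\{0<1<\dots<2n\}\to L_n$ be a path. Define $f:L_n\to\{0,\dots,2n\}$ by $f(a)=\min\{x: a\le p(x)\}$, and let $G=F\circ p$. Then for any $x\le y$ in $\{0,\dots,2n\}$ and every dimension $q$, \[\mathsf{Dgm}_qG[x,y]=\sum_{[a,b]\in\mathsf{Int}\,L_n,\ f(a)=x,\ f(b)=y}\mathsf{Dgm}_qF[a,b].\]
   Context: $K$ is a finite simplicial complex, coefficients in a field. A path is a monotone injective map $p$ from the chain $\{0<\dots<2n\}$ to $L_n=\{0,\dots,n\}^2$ (product order) with $p(0)=(0,0)$, $p(2n)=(n,n)$, consecutive grades differing by $1$ in exactly one coordinate. For a finite poset $P$ with least element $\bot$ and greatest $\top$: $\mathsf{Int}\,P=\{[a,b]:a\le b\}$ with $[a,b]\le[c,d]$ iff $a\le c$, $b\le d$; a $P$-filtration is a monotone map $F$ from $P$ to subcomplexes of $K$ with $F(\bot)=\emptyset$, $F(\top)=K$; $ZB_qF[a,b]=\dim(Z_qF(a)\cap B_qF(b))$ for $b\ne\top$ and $\dim Z_qF(a)$ for $b=\top$ ($Z_q,B_q$ = $q$-cycles, $q$-boundaries); $\mathsf{Dgm}_qF$ is the unique function on $\mathsf{Int}\,P$ with $ZB_qF[c,d]=\sum_{[a,b]\le[c,d]}\mathsf{Dgm}_qF[a,b]$. A $2$-filtration is an $L_n$-filtration; $G$ is a $\{0,\dots,2n\}$-filtration. *)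

theory Defs
  imports Main "HOL.Vector_Spaces" "HOL-Library.Function_Algebras"
begin

definition simplicial_complex :: "'v set set \<Rightarrow> bool" where
  "simplicial_complex K \<longleftrightarrow> finite K \<and>
     (\<forall>\<sigma>\<in>K. finite \<sigma> \<and> \<sigma> \<noteq> {}) \<and>
     (\<forall>\<sigma>\<in>K. \<forall>\<tau>. \<tau> \<subseteq> \<sigma> \<and> \<tau> \<noteq> {} \<longrightarrow> \<tau> \<in> K)"

definition subcomplex :: "'v set set \<Rightarrow> 'v set set \<Rightarrow> bool" where
  "subcomplex L K \<longleftrightarrow> L \<subseteq> K \<and> simplicial_complex L"

text \<open>A chain is a coefficient function on simplices; q-simplices have q+1 vertices.
  Orientation is induced by the linear order on vertices.\<close>

definition chains :: "'v set set \<Rightarrow> nat \<Rightarrow> ('v set \<Rightarrow> 'k::field) set" where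
  "chains X q = {c. \<forall>\<sigma>. c \<sigma> \<noteq> 0 \<longrightarrow> \<sigma> \<in> X \<and> card \<sigma> = Suc q}"

definition bd :: "'v::linorder set set \<Rightarrow> ('v set \<Rightarrow> 'k::field) \<Rightarrow> 'v set \<Rightarrow> 'k" where
  "bd K c \<tau> = (if \<tau> = {} then 0 else
     (\<Sum>\<sigma>\<in>K. if \<tau> \<subset> \<sigma> \<and> card \<sigma> = Suc (card \<tau>)
             then (- 1) ^ card {u\<in>\<tau>. u < the_elem (\<sigma> - \<tau>)} * c \<sigma> else 0))"

definition cycles :: "'v::linorder set set \<Rightarrow> 'v set set \<Rightarrow> nat \<Rightarrow> ('v set \<Rightarrow> 'k::field) set" where
  "cycles K X q = {c \<in> chains X q. bd K c = 0}"

definition boundaries :: "'v::linorder set set \<Rightarrow> 'v set set \<Rightarrow> nat \<Rightarrow> ('v set \<Rightarrow> 'k::field) set" where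
  "boundaries K X q = bd K ` chains X (Suc q)"

definition sdim :: "('v set \<Rightarrow> 'k::field) set \<Rightarrow> nat" where
  "sdim S = vector_space.dim (\<lambda>r (c::'v set \<Rightarrow> 'k) x. r * c x) S"

definition filtration ::
  "'p set \<Rightarrow> ('p \<Rightarrow> 'p \<Rightarrow> bool) \<Rightarrow> 'p \<Rightarrow> 'p \<Rightarrow> 'v set set \<Rightarrow> ('p \<Rightarrow> 'v set set) \<Rightarrow> bool" where
  "filtration P le pbot ptop K F \<longleftrightarrow>
     (\<forall>a\<in>P. subcomplex (F a) K) \<and>
     (\<forall>a\<in>P. \<forall>b\<in>P. le a b \<longrightarrow> F a \<subseteq> F b) \<and>
     F pbot = {} \<and> F ptop = K"

definition ZB :: "'k::field itself \<Rightarrow> 'v::linorder set set \<Rightarrow> 'p \<Rightarrow> ('p \<Rightarrow> 'v set set)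
                  \<Rightarrow> nat \<Rightarrow> 'p \<Rightarrow> 'p \<Rightarrow> nat" where
  "ZB (_::'k itself) K ptop F q a b =
     (if b \<noteq> ptop
      then sdim (cycles K (F a) q \<inter> boundaries K (F b) q :: ('v set \<Rightarrow> 'k) set)
      else sdim (cycles K (F a) q :: ('v set \<Rightarrow> 'k) set))"

definition intervals :: "'p set \<Rightarrow> ('p \<Rightarrow> 'p \<Rightarrow> bool) \<Rightarrow> ('p \<times> 'p) set" where
  "intervals P le = {(a, b). a \<in> P \<and> b \<in> P \<and> le a b}"

definition Dgm :: "'k::field itself \<Rightarrow> 'v::linorder set set \<Rightarrow> 'p set \<Rightarrow> ('p \<Rightarrow> 'p \<Rightarrow> bool) \<Rightarrow> 'p
                   \<Rightarrow> ('p \<Rightarrow> 'v set set) \<Rightarrow> nat \<Rightarrow> 'p \<times> 'p \<Rightarrow> int" where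
  "Dgm k K P le ptop F q = (THE D.
     (\<forall>(c, d)\<in>intervals P le.
        int (ZB k K ptop F q c d) =
        (\<Sum>(a, b)\<in>{(a, b)\<in>intervals P le. le a c \<and> le b d}. D (a, b))) \<and>
     (\<forall>I. I \<notin> intervals P le \<longrightarrow> D I = 0))"

definition grid :: "nat \<Rightarrow> (nat \<times> nat) set" where
  "grid n = {0..n} \<times> {0..n}"

definition grid_le :: "nat \<times> nat \<Rightarrow> nat \<times> nat \<Rightarrow> bool" where
  "grid_le a b \<longleftrightarrow> fst a \<le> fst b \<and> snd a \<le> snd b"

definition is_path :: "nat \<Rightarrow> (nat \<Rightarrow> nat \<times> nat) \<Rightarrow> bool" where
  "is_path n p \<longleftrightarrow>
     p ` {0..2*n} \<subseteq> grid n \<and>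
     (\<forall>i\<in>{0..2*n}. \<forall>j\<in>{0..2*n}. i \<le> j \<longrightarrow> grid_le (p i) (p j)) \<and>
     inj_on p {0..2*n} \<and>
     p 0 = (0, 0) \<and> p (2*n) = (n, n) \<and>
     (\<forall>i<2*n. p (Suc i) = (Suc (fst (p i)), snd (p i)) \<or> p (Suc i) = (fst (p i), Suc (snd (p i))))"

end

theory Submission
  imports Defs
begin

lemma mob_ex:
  fixes Q :: "'a set" and R :: "'a \<Rightarrow> 'a \<Rightarrow> bool" and h :: "'a \<Rightarrow> nat" and Z :: "'a \<Rightarrow> int"
  assumes fin: "finite Q" and rf: "\<forall>c\<in>Q. R c c" and hr: "\<forall>a\<in>Q. \<forall>c\<in>Q. R a c \<and> a \<noteq> c \<longrightarrow> h a < h c"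
  shows "\<exists>D. (\<forall>c\<in>Q. Z c = sum D {a\<in>Q. R a c}) \<and> (\<forall>I. I \<notin> Q \<longrightarrow> D I = 0)"
  using fin
proof (induction Q rule: finite_remove_induct)
  case empty
  then show ?case by (intro exI[of _ "\<lambda>_. 0"]) auto
next
  case (remove A)
  obtain m where mA: "m \<in> A" and mmax: "\<forall>c\<in>A. h c \<le> h m"
  proof -
    have "Max (h ` A) \<in> h ` A" using remove.hyps(1,2) by simp
    then obtain m where "m \<in> A" "h m = Max (h ` A)" by force
    moreover have "\<forall>c\<in>A. h c \<le> Max (h ` A)" using remove.hyps(1) by simp
    ultimately show ?thesis using that by metis
  qed
  obtain D0 where D0: "\<forall>c\<in>A-{m}. Z c = sum D0 {a\<in>A-{m}. R a c}" "\<forall>I. I \<notin> A-{m} \<longrightarrow> D0 I = 0"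
    using remove.IH[OF mA] by blast
  define D where "D = D0(m := Z m - sum D0 {a\<in>A-{m}. R a m})"
  have "\<forall>c\<in>A. Z c = sum D {a\<in>A. R a c}"
  proof
    fix c assume cA: "c \<in> A"
    show "Z c = sum D {a\<in>A. R a c}"
    proof (cases "c = m")
      case True
      have fs: "finite {a\<in>A-{m}. R a m}" using remove.hyps(1) by auto
      have Rm: "R m m" using rf remove.hyps(3) mA by auto
      have "{a\<in>A. R a c} = insert m {a\<in>A-{m}. R a m}" using True mA Rm by auto
      moreover have "sum D {a\<in>A-{m}. R a m} = sum D0 {a\<in>A-{m}. R a m}"
        unfolding D_def by (rule sum.cong) auto
      ultimately show ?thesis using fs by (simp add: D_def True)
    next
      case False
      have "\<not> R m c"
      proof
        assume "R m c"
        then have "h m < h c" using False hr remove.hyps(3) mA cA by blast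
        moreover have "h c \<le> h m" using mmax cA by blast
        ultimately show False by simp
      qed
      then have "{a\<in>A. R a c} = {a\<in>A-{m}. R a c}" by blast
      moreover have "sum D {a\<in>A-{m}. R a c} = sum D0 {a\<in>A-{m}. R a c}"
        unfolding D_def by (rule sum.cong) auto
      ultimately show ?thesis using D0(1) cA False by auto
    qed
  qed
  moreover have "\<forall>I. I \<notin> A \<longrightarrow> D I = 0" using D0(2) mA by (auto simp: D_def)
  ultimately show ?case by blast
qed


lemma mob_uniq:
  fixes Q :: "'a set" and R :: "'a \<Rightarrow> 'a \<Rightarrow> bool" and h :: "'a \<Rightarrow> nat" and Z :: "'a \<Rightarrow> int"
  assumes fin: "finite Q" and rf: "\<forall>c\<in>Q. R c c" and hr: "\<forall>a\<in>Q. \<forall>c\<in>Q. R a c \<and> a \<noteq> c \<longrightarrow> h a < h c"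
    and D1: "\<forall>c\<in>Q. Z c = sum D1 {a\<in>Q. R a c}" "\<forall>I. I \<notin> Q \<longrightarrow> D1 I = 0"
    and D2: "\<forall>c\<in>Q. Z c = sum D2 {a\<in>Q. R a c}" "\<forall>I. I \<notin> Q \<longrightarrow> D2 I = 0"
  shows "D1 = D2"
proof (rule ccontr)
  assume ne: "D1 \<noteq> D2"
  define S where "S = {c\<in>Q. D1 c \<noteq> D2 c}"
  have "S \<noteq> {}"
  proof -
    obtain c where "D1 c \<noteq> D2 c" using ne by blast
    then have "c \<in> Q" using D1(2) D2(2) by metis
    then show ?thesis using \<open>D1 c \<noteq> D2 c\<close> S_def by blast
  qed
  moreover have fS: "finite S" using fin S_def by simp
  ultimately have "Min (h ` S) \<in> h ` S" by simp
  then obtain m where mS: "m \<in> S" and hm: "h m = Min (h ` S)" by force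
  have mmin: "\<forall>c\<in>S. h m \<le> h c" using hm fS by simp
  have mQ: "m \<in> Q" using mS S_def by blast
  define A where "A = {a\<in>Q. R a m}"
  have fA: "finite A" using fin A_def by simp
  have mA: "m \<in> A" using rf mQ A_def by blast
  have eq: "\<forall>a\<in>A - {m}. D1 a = D2 a"
  proof
    fix a assume aA: "a \<in> A - {m}"
    then have "h a < h m" using hr mQ A_def by blast
    then have "a \<notin> S" using mmin by (meson leD)
    then show "D1 a = D2 a" using aA A_def S_def by blast
  qed
  have "sum D1 A = sum D2 A" using D1(1) D2(1) mQ A_def by simp
  moreover have "sum D1 A = D1 m + sum D1 (A - {m})" using sum.remove[OF fA mA] .
  moreover have "sum D2 A = D2 m + sum D2 (A - {m})" using sum.remove[OF fA mA] .
  moreover have "sum D1 (A - {m}) = sum D2 (A - {m})" using eq by (intro sum.cong) auto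
  ultimately have "D1 m = D2 m" by simp
  then show False using mS S_def by blast
qed

lemma Dgm_char:
  fixes P :: "'p set" and le :: "'p \<Rightarrow> 'p \<Rightarrow> bool" and h :: "'p \<Rightarrow> nat"
    and k :: "'k::field itself" and K :: "'v::linorder set set"
  assumes fP: "finite P" and rP: "\<forall>a\<in>P. le a a" and hP: "\<forall>a\<in>P. \<forall>b\<in>P. le a b \<and> a \<noteq> b \<longrightarrow> h a < h b"
  shows "\<exists>!D. (\<forall>(c, d)\<in>intervals P le.
        int (ZB k K ptop F q c d) =
        (\<Sum>(a, b)\<in>{(a, b)\<in>intervals P le. le a c \<and> le b d}. D (a, b))) \<and>
     (\<forall>I. I \<notin> intervals P le \<longrightarrow> D I = 0)"
proof -
  define Q where "Q = intervals P le"
  define R where "R = (\<lambda>I J. le (fst I) (fst J) \<and> le (snd I) (snd J))"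
  define Z where "Z = (\<lambda>J. int (ZB k K ptop F q (fst J) (snd J)))"
  define h' where "h' = (\<lambda>I. h (fst I) + h (snd I))"
  have fQ: "finite Q" unfolding Q_def intervals_def
    by (rule finite_subset[of _ "P \<times> P"]) (auto simp: fP)
  have rQ: "\<forall>c\<in>Q. R c c" using rP unfolding Q_def R_def intervals_def by auto
  have hle: "\<And>a b. a \<in> P \<Longrightarrow> b \<in> P \<Longrightarrow> le a b \<Longrightarrow> h a \<le> h b"
    using hP by (metis order.order_iff_strict)
  have hQ: "\<forall>a\<in>Q. \<forall>c\<in>Q. R a c \<and> a \<noteq> c \<longrightarrow> h' a < h' c"
  proof (intro ballI impI)
    fix a c assume a: "a \<in> Q" and c: "c \<in> Q" and rac: "R a c \<and> a \<noteq> c"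
    obtain a1 a2 where ae: "a = (a1, a2)" by force
    obtain c1 c2 where ce: "c = (c1, c2)" by force
    have inP: "a1 \<in> P" "a2 \<in> P" "c1 \<in> P" "c2 \<in> P" using a c ae ce unfolding Q_def intervals_def by auto
    have l: "le a1 c1" "le a2 c2" using rac ae ce R_def by auto
    have "a1 \<noteq> c1 \<or> a2 \<noteq> c2" using rac ae ce by auto
    then show "h' a < h' c"
    proof
      assume "a1 \<noteq> c1"
      then have "h a1 < h c1" using hP inP l by blast
      moreover have "h a2 \<le> h c2" using hle inP l by blast
      ultimately show ?thesis using ae ce h'_def by simp
    next
      assume "a2 \<noteq> c2"
      then have "h a2 < h c2" using hP inP l by blast
      moreover have "h a1 \<le> h c1" using hle inP l by blast
      ultimately show ?thesis using ae ce h'_def by simp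
    qed
  qed
  have conv: "((\<forall>(c, d)\<in>intervals P le.
        int (ZB k K ptop F q c d) =
        (\<Sum>(a, b)\<in>{(a, b)\<in>intervals P le. le a c \<and> le b d}. D (a, b))) \<and>
     (\<forall>I. I \<notin> intervals P le \<longrightarrow> D I = 0)) \<longleftrightarrow>
     ((\<forall>c\<in>Q. Z c = sum D {a\<in>Q. R a c}) \<and> (\<forall>I. I \<notin> Q \<longrightarrow> D I = 0))" for D
  proof -
    have s: "{(a, b)\<in>intervals P le. le a c \<and> le b d} = {I\<in>Q. R I (c, d)}" for c d
      unfolding Q_def R_def by auto
    have t: "(\<Sum>(a, b)\<in>A. D (a, b)) = sum D A" for A by simp
    show ?thesis unfolding s t Z_def Q_def by (auto simp: split_beta)
  qed
  show ?thesis unfolding conv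
    using mob_ex[OF fQ rQ hQ, of Z] mob_uniq[OF fQ rQ hQ, of Z] by blast
qed


theorem mainTheorem7:
  fixes K :: "'v::linorder set set"
    and F :: "nat \<times> nat \<Rightarrow> 'v set set"
    and p :: "nat \<Rightarrow> nat \<times> nat"
    and n q x y :: nat
    and k :: "'k::field itself"
  assumes "simplicial_complex K"
    and "filtration (grid n) grid_le (0, 0) (n, n) K F"
    and "is_path n p"
    and "x \<le> y" and "y \<le> 2 * n"
  shows "let f = (\<lambda>a. LEAST i. i \<le> 2 * n \<and> grid_le a (p i)); G = F \<circ> p in
     Dgm k K {0..2*n} (\<le>) (2*n) G q (x, y) =
     (\<Sum>(a, b)\<in>{(a, b)\<in>intervals (grid n) grid_le. f a = x \<and> f b = y}.
        Dgm k K (grid n) grid_le (n, n) F q (a, b))"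
proof -
  define f where "f = (\<lambda>a. LEAST i. i \<le> 2 * n \<and> grid_le a (p i))"
  define G where "G = F \<circ> p"
  have pmono: "\<And>i j. i \<le> 2*n \<Longrightarrow> j \<le> 2*n \<Longrightarrow> i \<le> j \<Longrightarrow> grid_le (p i) (p j)"
    using assms(3) unfolding is_path_def by auto
  have pinj: "inj_on p {0..2*n}" and pend: "p (2*n) = (n, n)" and pgrid: "\<And>i. i \<le> 2*n \<Longrightarrow> p i \<in> grid n"
    using assms(3) unfolding is_path_def by auto
  have gtrans: "\<And>a b c. grid_le a b \<Longrightarrow> grid_le b c \<Longrightarrow> grid_le a c"
    unfolding grid_le_def by auto
  have key: "f a \<le> 2*n \<and> grid_le a (p (f a))" if "a \<in> grid n" for a
  proof -
    have "2*n \<le> 2*n \<and> grid_le a (p (2*n))" using that pend unfolding grid_def grid_le_def by auto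
    then show ?thesis unfolding f_def by (rule LeastI)
  qed
  have key2: "f a \<le> z \<longleftrightarrow> grid_le a (p z)" if "a \<in> grid n" "z \<le> 2*n" for a z
  proof
    assume "f a \<le> z"
    then show "grid_le a (p z)" using key[OF that(1)] pmono that(2) gtrans by blast
  next
    assume "grid_le a (p z)"
    then show "f a \<le> z" unfolding f_def using that(2) by (intro Least_le) simp
  qed
  have fmono: "f a \<le> f b" if "(a, b) \<in> intervals (grid n) grid_le" for a b
  proof -
    have ab: "a \<in> grid n" "b \<in> grid n" "grid_le a b" using that unfolding intervals_def by auto
    have "grid_le a (p (f b))" using key[OF ab(2)] ab(3) gtrans by blast
    then show ?thesis using key2[OF ab(1)] key[OF ab(2)] by blast
  qed
  have fgrid: "finite (grid n)" unfolding grid_def by simp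
  have rgrid: "\<forall>a\<in>grid n. grid_le a a" unfolding grid_le_def by auto
  have hgrid: "\<forall>a\<in>grid n. \<forall>b\<in>grid n. grid_le a b \<and> a \<noteq> b \<longrightarrow> fst a + snd a < fst b + snd b"
    unfolding grid_le_def by (auto simp: prod_eq_iff)
  define DF where "DF = Dgm k K (grid n) grid_le (n, n) F q"
  have DFp: "(\<forall>(c, d)\<in>intervals (grid n) grid_le.
        int (ZB k K (n, n) F q c d) =
        (\<Sum>(a, b)\<in>{(a, b)\<in>intervals (grid n) grid_le. grid_le a c \<and> grid_le b d}. DF (a, b))) \<and>
     (\<forall>I. I \<notin> intervals (grid n) grid_le \<longrightarrow> DF I = 0)"
    unfolding DF_def Dgm_def by (rule theI'[OF Dgm_char[OF fgrid rgrid hgrid]])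
  define D' where "D' = (\<lambda>(x::nat, y::nat). \<Sum>(a, b)\<in>{(a, b)\<in>intervals (grid n) grid_le. f a = x \<and> f b = y}. DF (a, b))"
  have fint: "finite (intervals (grid n) grid_le)" unfolding intervals_def
    by (rule finite_subset[of _ "grid n \<times> grid n"]) (auto simp: fgrid)
  have P1: "\<forall>I. I \<notin> intervals {0..2*n} (\<le>) \<longrightarrow> D' I = 0"
  proof (intro allI impI)
    fix I :: "nat \<times> nat" assume I: "I \<notin> intervals {0..2*n} (\<le>)"
    obtain u v where Ie: "I = (u, v)" by force
    have e: "{(a, b)\<in>intervals (grid n) grid_le. f a = u \<and> f b = v} = {}"
    proof (rule ccontr)
      assume "{(a, b)\<in>intervals (grid n) grid_le. f a = u \<and> f b = v} \<noteq> {}"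
      then obtain a b where ab: "(a, b) \<in> intervals (grid n) grid_le" "f a = u" "f b = v" by blast
      have "b \<in> grid n" using ab(1) unfolding intervals_def by auto
      then have "v \<le> 2*n" using key ab(3) by blast
      moreover have "u \<le> v" using fmono[OF ab(1)] ab by simp
      ultimately show False using I Ie unfolding intervals_def by auto
    qed
    have "D' (u, v) = (\<Sum>(a, b)\<in>{(a, b)\<in>intervals (grid n) grid_le. f a = u \<and> f b = v}. DF (a, b))"
      unfolding D'_def by simp
    also have "\<dots> = 0" unfolding e by simp
    finally show "D' I = 0" using Ie by simp
  qed
  have P2: "\<forall>(c, d)\<in>intervals {0..2*n} (\<le>).
        int (ZB k K (2*n) G q c d) =
        (\<Sum>(a, b)\<in>{(a, b)\<in>intervals {0..2*n} (\<le>). a \<le> c \<and> b \<le> d}. D' (a, b))"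
  proof (intro ballI, clarify)
    fix c d :: nat assume cd: "(c, d) \<in> intervals {0..2*n} (\<le>)"
    have c2: "c \<le> 2*n" and d2: "d \<le> 2*n" and cled: "c \<le> d" using cd unfolding intervals_def by auto
    define T where "T = {(a, b)\<in>intervals {0..2*n} (\<le>). a \<le> c \<and> b \<le> d}"
    define S where "S = {(a, b)\<in>intervals (grid n) grid_le. f a \<le> c \<and> f b \<le> d}"
    define g where "g = (\<lambda>(a::nat\<times>nat, b::nat\<times>nat). (f a, f b))"
    have fT: "finite T" unfolding T_def intervals_def
      by (rule finite_subset[of _ "{0..2*n} \<times> {0..2*n}"]) auto
    have fS: "finite S" unfolding S_def using fint by (rule rev_finite_subset) auto
    have gST: "g ` S \<subseteq> T"
    proof
      fix J assume "J \<in> g ` S"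
      then obtain a b where ab: "(a, b) \<in> S" "J = (f a, f b)" unfolding g_def by auto
      have "(a, b) \<in> intervals (grid n) grid_le" using ab(1) S_def by simp
      then have "f a \<le> f b" by (rule fmono)
      then show "J \<in> T" using ab c2 d2 unfolding S_def T_def intervals_def by auto
    qed
    have "(\<Sum>(a, b)\<in>T. D' (a, b)) = (\<Sum>J\<in>T. sum DF {I. I \<in> S \<and> g I = J})"
    proof (rule sum.cong[OF refl])
      fix J assume "J \<in> T"
      obtain u v where Je: "J = (u, v)" by force
      have uv: "u \<le> c" "v \<le> d" using \<open>J \<in> T\<close> Je T_def by auto
      have "{(a, b)\<in>intervals (grid n) grid_le. f a = u \<and> f b = v} = {I. I \<in> S \<and> g I = J}"
        unfolding S_def g_def Je using uv by auto
      then show "(case J of (a, b) \<Rightarrow> D' (a, b)) = sum DF {I. I \<in> S \<and> g I = J}"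
        unfolding D'_def Je by (simp add: split_beta)
    qed
    also have "\<dots> = sum DF S" by (rule sum.group[OF fS fT gST])
    also have "S = {(a, b)\<in>intervals (grid n) grid_le. grid_le a (p c) \<and> grid_le b (p d)}"
      unfolding S_def intervals_def using key2 c2 d2 by auto
    also have "sum DF \<dots> = (\<Sum>(a, b)\<in>{(a, b)\<in>intervals (grid n) grid_le. grid_le a (p c) \<and> grid_le b (p d)}. DF (a, b))"
      by (simp add: split_beta)
    also have "\<dots> = int (ZB k K (n, n) F q (p c) (p d))"
    proof -
      have "(p c, p d) \<in> intervals (grid n) grid_le"
        unfolding intervals_def using pgrid c2 d2 pmono cled by auto
      then show ?thesis using DFp by auto
    qed
    also have "ZB k K (n, n) F q (p c) (p d) = ZB k K (2*n) G q c d"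
    proof -
      have "p d = (n, n) \<longleftrightarrow> d = 2*n"
        using pinj pend d2 unfolding inj_on_def by (metis atLeastAtMost_iff le0 order_refl)
      then show ?thesis unfolding ZB_def G_def by simp
    qed
    finally show "int (ZB k K (2*n) G q c d) =
        (\<Sum>(a, b)\<in>{(a, b)\<in>intervals {0..2*n} (\<le>). a \<le> c \<and> b \<le> d}. D' (a, b))"
      unfolding T_def by simp
  qed
  have rn: "\<forall>a\<in>{0..2*n}. (a::nat) \<le> a" by simp
  have hn: "\<forall>a\<in>{0..2*n}. \<forall>b\<in>{0..2*n}. (a::nat) \<le> b \<and> a \<noteq> b \<longrightarrow> id a < id b" by auto
  have "Dgm k K {0..2*n} (\<le>) (2*n) G q = D'"
    unfolding Dgm_def by (rule the1_equality[OF Dgm_char[OF _ rn hn]]) (use P1 P2 in auto)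
  then show ?thesis unfolding Let_def f_def[symmetric] G_def[symmetric]
    by (simp add: D'_def DF_def)
qed

end
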